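(* Let $n=Hc$ i.i.d. samples be drawn from the uniform distribution on $[0,1]$, with order statistics $y_{(1,n)}\le\dots\le y_{(n,n)}$. For $H,c$ sufficiently large and $k=1,\dots,H-1$: (i) there is a constant $C>0$ such that for any $\epsilon>\frac1{Hc-1}$, $\mathbb{P}\big(y_{(kc,Hc)}>\frac kH+\epsilon\big)\le CH\sqrt{Hc+1}\exp\big(-(Hc+1)\frac{\epsilon^2}2\big)$; (ii) there is a constant $C>0$ such that for any $\epsilon>\frac2{Hc-1}$, $\mathbb{P}\big(y_{(kc,Hc)}<\frac kH-\epsilon\big)\le CH\sqrt{Hc+1}\exp\big(-(Hc+1)\frac{\epsilon^2}8\big)$; (iii) let $\delta(k,H,c)=|y_{((k-1)c,Hc)}-y_{(kc,Hc)}|$ for $2\le k\le H-1$, $\delta(1,H,c)=|y_{(c,Hc)}|$ and $\delta(H,H,c)=|1-y_{((H-1)c,Hc)}|$; there is a constant $C>0$ such that for any $\epsilon>\frac4{Hc-1}$ and any $1\le k\le H$, $\mathbb{P}\big(|\delta(k,H,c)-\frac1H|>\epsilon\big)\le CH\sqrt{Hc+1}\exp\big(-(Hc+1)\frac{\epsilon^2}{32}\big)$.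
   Context: $y_{(i,n)}$ denotes the $i$-th smallest of $n$ samples. *)

theory Defs
  imports "HOL-Probability.Probability"
begin

definition unif_sample :: "nat \<Rightarrow> (nat \<Rightarrow> real) measure" where
  "unif_sample n = PiM {..<n} (\<lambda>_. uniform_measure lborel {0..1::real})"

text \<open>Order statistic y_(i,n): the i-th smallest (1-based) of the n samples x 0, ..., x (n-1).\<close>
definition ord_stat :: "nat \<Rightarrow> nat \<Rightarrow> (nat \<Rightarrow> real) \<Rightarrow> real" where
  "ord_stat i n x = sort (map x [0..<n]) ! (i - 1)"

definition spacing :: "nat \<Rightarrow> nat \<Rightarrow> nat \<Rightarrow> (nat \<Rightarrow> real) \<Rightarrow> real" where
  "spacing k H c x =
     (if k = 1 then \<bar>ord_stat c (H*c) x\<bar>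
      else if k = H then \<bar>1 - ord_stat ((H-1)*c) (H*c) x\<bar>
      else \<bar>ord_stat ((k-1)*c) (H*c) x - ord_stat (k*c) (H*c) x\<bar>)"

end

theory Submission
  imports Defs
begin


abbreviation U :: "real measure" where "U \<equiv> uniform_measure lborel {0..1::real}"

lemma U_prob: "prob_space U"
  by (rule prob_space_uniform_measure) auto

lemma M_prob: "prob_space (unif_sample n)"
  unfolding unif_sample_def by (rule prob_space_PiM) (rule U_prob)

lemma space_M: "space (unif_sample n) = {..<n} \<rightarrow>\<^sub>E UNIV"
  unfolding unif_sample_def by (simp add: space_PiM)

lemma distr_coord: "i < n \<Longrightarrow> distr (unif_sample n) U (\<lambda>x. x i) = U"
  unfolding unif_sample_def by (rule distr_PiM_component) (auto intro: U_prob)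

lemma indep_coord: assumes "n > 0"
  shows "prob_space.indep_vars (unif_sample n) (\<lambda>_. U) (\<lambda>i x. x i) {..<n}"
proof -
  interpret prob_space "unif_sample n" by (rule M_prob)
  have "distr (unif_sample n) (\<Pi>\<^sub>M i\<in>{..<n}. U) (\<lambda>x. \<lambda>i\<in>{..<n}. x i) = (\<Pi>\<^sub>M i\<in>{..<n}. U)"
  proof -
    have "distr (unif_sample n) (\<Pi>\<^sub>M i\<in>{..<n}. U) (\<lambda>x. \<lambda>i\<in>{..<n}. x i) = distr (unif_sample n) (unif_sample n) (\<lambda>x. x)"
      by (rule distr_cong) (auto simp: unif_sample_def space_PiM PiE_def extensional_def restrict_def fun_eq_iff)
    also have "\<dots> = unif_sample n" by (rule distr_id)
    finally show ?thesis by (simp add: unif_sample_def)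
  qed
  moreover have "(\<Pi>\<^sub>M i\<in>{..<n}. distr (unif_sample n) U (\<lambda>x. x i)) = (\<Pi>\<^sub>M i\<in>{..<n}. U)"
    by (rule PiM_cong) (auto simp: distr_coord)
  ultimately show ?thesis
    using assms by (subst indep_vars_iff_distr_eq_PiM') (auto simp: unif_sample_def)
qed

lemma AE_coord: "AE x in unif_sample n. \<forall>i<n. x i \<in> {0..1}"
proof -
  have "\<And>i. i < n \<Longrightarrow> AE x in unif_sample n. x i \<in> {0..1}"
    unfolding unif_sample_def
    by (rule AE_PiM_component) (auto intro: U_prob AE_uniform_measureI)
  then have "AE x in unif_sample n. \<forall>i\<in>{..<n}. x i \<in> {0..1}" by (subst AE_finite_all) auto
  then show ?thesis by (rule eventually_mono) auto
qed

definition bad :: "nat \<Rightarrow> (nat \<Rightarrow> real) set" where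
  "bad n = {x \<in> space (unif_sample n). \<not> (\<forall>i<n. x i \<in> {0..1})}"

lemma bad_sets: "bad n \<in> sets (unif_sample n)"
  unfolding bad_def unif_sample_def by measurable

lemma bad_measure: "measure (unif_sample n) (bad n) = 0"
proof -
  have "emeasure (unif_sample n) (bad n) = 0"
    using AE_coord[of n] AE_iff_measurable[OF bad_sets bad_def[symmetric]] by simp
  then show ?thesis by (simp add: measure_def)
qed

lemma exp_coord:
  assumes "i < n" and S: "S \<in> sets borel"
  shows "prob_space.expectation (unif_sample n) (\<lambda>x. indicator S (x i) :: real) = measure lborel ({0..1} \<inter> S)"
proof -
  have "prob_space.expectation (unif_sample n) (\<lambda>x. indicator S (x i) :: real)
      = integral\<^sup>L (distr (unif_sample n) U (\<lambda>x. x i)) (indicator S)"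
    by (rule integral_distr[symmetric]) (use assms in \<open>auto simp: unif_sample_def\<close>)
  also have "\<dots> = integral\<^sup>L U (indicator S)" using assms by (simp add: distr_coord)
  also have "\<dots> = measure U S" using S by simp
  also have "\<dots> = measure lborel ({0..1} \<inter> S)" using S by simp
  finally show ?thesis .
qed



lemma sum_ind: "finite I \<Longrightarrow> (\<Sum>i\<in>I. indicator A (x i) :: real) = real (card {i\<in>I. x i \<in> A})"
  unfolding indicator_def by (simp add: sum.If_cases Int_def conj_commute)

lemma hoeff_le:
  assumes "n > 0" "0 \<le> t" "t \<le> 1" "\<delta> \<ge> 0"
  shows "measure (unif_sample n) {x\<in>space (unif_sample n). real (card {i\<in>{..<n}. x i \<le> t}) \<le> real n * t - \<delta>}
     \<le> exp (-2 * \<delta>\<^sup>2 / real n)"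
proof -
  interpret prob_space "unif_sample n" by (rule M_prob)
  define X where "X = (\<lambda>(i::nat) (x::nat\<Rightarrow>real). indicator {..t} (x i) :: real)"
  interpret H: Hoeffding_ineq "unif_sample n" "{..<n}" X "\<lambda>_. 0" "\<lambda>_. 1" "\<Sum>i\<in>{..<n}. expectation (X i)"
  proof unfold_locales
    show "indep_vars (\<lambda>_. borel) X {..<n}"
      unfolding X_def by (rule indep_vars_compose2[OF indep_coord[OF assms(1)]]) auto
  qed (auto simp: X_def)
  have mu: "(\<Sum>i\<in>{..<n}. expectation (X i)) = real n * t"
  proof -
    have "\<And>i. i < n \<Longrightarrow> expectation (X i) = t"
      unfolding X_def using assms by (subst exp_coord) (auto simp: Int_atLeastAtMost)
    then show ?thesis by simp
  qed
  have "prob {x\<in>space (unif_sample n). (\<Sum>i\<in>{..<n}. X i x) \<le> (\<Sum>i\<in>{..<n}. expectation (X i)) - \<delta>}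
        \<le> exp (- 2 * \<delta>\<^sup>2 / (\<Sum>i\<in>{..<n}. (1 - 0)\<^sup>2))"
    by (rule H.Hoeffding_ineq_le) (use assms in auto)
  moreover have "\<And>x. (\<Sum>i\<in>{..<n}. X i x) = real (card {i\<in>{..<n}. x i \<le> t})"
    unfolding X_def by (subst sum_ind) auto
  ultimately show ?thesis using mu by simp
qed

lemma hoeff_ge:
  assumes "n > 0" "0 \<le> s" "s \<le> 1" "\<delta> \<ge> 0"
  shows "measure (unif_sample n) {x\<in>space (unif_sample n). real (card {i\<in>{..<n}. x i < s}) \<ge> real n * s + \<delta>}
     \<le> exp (-2 * \<delta>\<^sup>2 / real n)"
proof -
  interpret prob_space "unif_sample n" by (rule M_prob)
  define X where "X = (\<lambda>(i::nat) (x::nat\<Rightarrow>real). indicator {..<s} (x i) :: real)"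
  interpret H: Hoeffding_ineq "unif_sample n" "{..<n}" X "\<lambda>_. 0" "\<lambda>_. 1" "\<Sum>i\<in>{..<n}. expectation (X i)"
  proof unfold_locales
    show "indep_vars (\<lambda>_. borel) X {..<n}"
      unfolding X_def by (rule indep_vars_compose2[OF indep_coord[OF assms(1)]]) auto
  qed (auto simp: X_def)
  have mu: "(\<Sum>i\<in>{..<n}. expectation (X i)) = real n * s"
  proof -
    have "\<And>i. i < n \<Longrightarrow> expectation (X i) = s"
      proof -
      fix i assume "i < n"
      have e: "{0..1} \<inter> {..<s} = {0..<s}" using assms by auto
      show "expectation (X i) = s" unfolding X_def using assms \<open>i < n\<close>
        by (subst exp_coord) (auto simp: e measure_def)
    qed
    then show ?thesis by simp
  qed
  have "prob {x\<in>space (unif_sample n). (\<Sum>i\<in>{..<n}. X i x) \<ge> (\<Sum>i\<in>{..<n}. expectation (X i)) + \<delta>}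
        \<le> exp (- 2 * \<delta>\<^sup>2 / (\<Sum>i\<in>{..<n}. (1 - 0)\<^sup>2))"
    by (rule H.Hoeffding_ineq_ge) (use assms in auto)
  moreover have "\<And>x. (\<Sum>i\<in>{..<n}. X i x) = real (card {i\<in>{..<n}. x i < s})"
    unfolding X_def by (subst sum_ind) auto
  ultimately show ?thesis using mu by simp
qed

lemma sorted_filter_le:
  fixes ys :: "real list"
  assumes "sorted ys" "j < length ys" "ys ! j > t"
  shows "length (filter (\<lambda>y. y \<le> t) ys) \<le> j"
proof -
  have "filter (\<lambda>y. y \<le> t) (drop j ys) = []"
  proof -
    have "\<forall>y\<in>set (drop j ys). \<not> y \<le> t"
    proof
      fix y assume "y \<in> set (drop j ys)"
      then obtain l where l: "l < length ys - j" "y = drop j ys ! l" by (auto simp: in_set_conv_nth)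
      then have "y = ys ! (j + l)" by simp
      moreover have "ys ! j \<le> ys ! (j + l)" using assms l by (intro sorted_nth_mono) auto
      ultimately show "\<not> y \<le> t" using assms by auto
    qed
    then show ?thesis by (simp add: filter_empty_conv)
  qed
  then have "filter (\<lambda>y. y \<le> t) ys = filter (\<lambda>y. y \<le> t) (take j ys)"
    by (metis append_Nil2 append_take_drop_id filter_append)
  also have "length \<dots> \<le> j" by (metis length_filter_le length_take min.bounded_iff order_refl) 
  finally show ?thesis .
qed

lemma sorted_filter_less:
  fixes ys :: "real list"
  assumes "sorted ys" "j < length ys" "ys ! j < s"
  shows "length (filter (\<lambda>y. y < s) ys) \<ge> j + 1"
proof -
  have "\<forall>y\<in>set (take (j+1) ys). y < s"
  proof
    fix y assume "y \<in> set (take (j+1) ys)"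
    then obtain l where l: "l < j + 1" "y = ys ! l" using assms(2) by (auto simp: in_set_conv_nth)
    moreover have "ys ! l \<le> ys ! j" using assms l by (intro sorted_nth_mono) auto
    ultimately show "y < s" using assms by auto
  qed
  then have "filter (\<lambda>y. y < s) (take (j+1) ys) = take (j+1) ys" by simp
  then have "length (filter (\<lambda>y. y < s) (take (j+1) ys)) = j + 1" using assms(2) by simp
  moreover have "length (filter (\<lambda>y. y < s) ys) \<ge> length (filter (\<lambda>y. y < s) (take (j+1) ys))"
    by (metis append_take_drop_id filter_append le_add1 length_append)
  ultimately show ?thesis by simp
qed

lemma count_eq: "length (filter P (sort (map x [0..<n]))) = card {i\<in>{..<n}. P (x i)}"
proof -
  have "length (filter P (sort (map x [0..<n]))) = length (filter P (map x [0..<n]))"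
    by (metis mset_filter mset_sort size_mset)
  also have "\<dots> = card {i. i < n \<and> P (x i)}" by (auto simp: length_filter_conv_card intro!: arg_cong[where f=card])
  finally show ?thesis by simp
qed

lemma ord_gt_count:
  assumes "1 \<le> m" "m \<le> n" "ord_stat m n x > t"
  shows "card {i\<in>{..<n}. x i \<le> t} \<le> m - 1"
  using sorted_filter_le[of "sort (map x [0..<n])" "m - 1" t] assms count_eq[of "\<lambda>y. y \<le> t" x n]
  by (simp add: ord_stat_def)

lemma ord_lt_count:
  assumes "1 \<le> m" "m \<le> n" "ord_stat m n x < s"
  shows "card {i\<in>{..<n}. x i < s} \<ge> m"
  using sorted_filter_less[of "sort (map x [0..<n])" "m - 1" s] assms count_eq[of "\<lambda>y. y < s" x n]
  by (simp add: ord_stat_def)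

lemma ord_in01:
  assumes "1 \<le> m" "m \<le> n" "\<forall>i<n. x i \<in> {0..1}"
  shows "ord_stat m n x \<in> {0..1}"
proof -
  have "ord_stat m n x \<in> set (sort (map x [0..<n]))"
    unfolding ord_stat_def using assms by (intro nth_mem) auto
  then show ?thesis using assms by auto
qed



lemma measure_mono_any:
  assumes "B \<in> sets (unif_sample n)" "A \<subseteq> B"
  shows "measure (unif_sample n) A \<le> measure (unif_sample n) B"
proof -
  interpret prob_space "unif_sample n" by (rule M_prob)
  show ?thesis
  proof (cases "A \<in> sets (unif_sample n)")
    case True then show ?thesis using assms by (intro finite_measure_mono)
  next
    case False then show ?thesis by (simp add: measure_notin_sets)
  qed
qed

lemma card_set_le_sets:
  "{x\<in>space (unif_sample n). real (card {i\<in>{..<n}. x i \<le> t}) \<le> r} \<in> sets (unif_sample n)"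
proof -
  have "{x\<in>space (unif_sample n). real (card {i\<in>{..<n}. x i \<le> t}) \<le> r}
      = {x\<in>space (unif_sample n). (\<Sum>i\<in>{..<n}. indicator {..t} (x i) :: real) \<le> r}"
    by (subst sum_ind) auto
  also have "\<dots> \<in> sets (unif_sample n)" unfolding unif_sample_def by measurable
  finally show ?thesis .
qed

lemma card_set_ge_sets:
  "{x\<in>space (unif_sample n). real (card {i\<in>{..<n}. x i < s}) \<ge> r} \<in> sets (unif_sample n)"
proof -
  have "{x\<in>space (unif_sample n). real (card {i\<in>{..<n}. x i < s}) \<ge> r}
      = {x\<in>space (unif_sample n). (\<Sum>i\<in>{..<n}. indicator {..<s} (x i) :: real) \<ge> r}"
    by (subst sum_ind) auto
  also have "\<dots> \<in> sets (unif_sample n)" unfolding unif_sample_def by measurable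
  finally show ?thesis .
qed

lemma core_upper:
  assumes "1 \<le> m" "m \<le> n" "\<delta> \<ge> 0" "real m + \<delta> \<le> real n * t"
  shows "\<exists>B\<in>sets (unif_sample n). {x\<in>space (unif_sample n). ord_stat m n x > t} \<subseteq> B
           \<and> measure (unif_sample n) B \<le> exp (-2 * \<delta>\<^sup>2 / real n)"
proof (cases "t \<le> 1")
  case True
  have n: "n > 0" using assms by auto
  have t0: "t \<ge> 0"
  proof (rule ccontr)
    assume "\<not> t \<ge> 0"
    then have "real n * t \<le> 0" using n by (simp add: mult_nonneg_nonpos)
    then show False using assms by simp
  qed
  let ?B = "{x\<in>space (unif_sample n). real (card {i\<in>{..<n}. x i \<le> t}) \<le> real n * t - \<delta>}"
  show ?thesis
  proof (intro bexI conjI)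
    show "{x\<in>space (unif_sample n). ord_stat m n x > t} \<subseteq> ?B"
    proof safe
      fix x assume "x \<in> space (unif_sample n)" "ord_stat m n x > t"
      then have "card {i\<in>{..<n}. x i \<le> t} \<le> m - 1" using ord_gt_count assms by blast
      then have "real (card {i\<in>{..<n}. x i \<le> t}) \<le> real m" by linarith
      then show "real (card {i\<in>{..<n}. x i \<le> t}) \<le> real n * t - \<delta>" using assms by linarith
    qed
    show "measure (unif_sample n) ?B \<le> exp (-2 * \<delta>\<^sup>2 / real n)"
      using hoeff_le[OF n t0 True assms(3)] .
  qed (rule card_set_le_sets)
next
  case False
  show ?thesis
  proof (intro bexI conjI)
    show "{x\<in>space (unif_sample n). ord_stat m n x > t} \<subseteq> bad n"
      unfolding bad_def
    proof safe
      fix x assume "x \<in> space (unif_sample n)" "ord_stat m n x > t" "\<forall>i<n. x i \<in> {0..1}"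
      then show False using ord_in01[OF assms(1,2), of x] False by auto
    qed
  qed (auto simp: bad_measure bad_sets)
qed

lemma core_lower:
  assumes "1 \<le> m" "m \<le> n" "\<delta> \<ge> 0" "real n * s + \<delta> \<le> real m"
  shows "\<exists>B\<in>sets (unif_sample n). {x\<in>space (unif_sample n). ord_stat m n x < s} \<subseteq> B
           \<and> measure (unif_sample n) B \<le> exp (-2 * \<delta>\<^sup>2 / real n)"
proof (cases "s \<ge> 0")
  case True
  have n: "n > 0" using assms by auto
  have s1: "s \<le> 1"
  proof (rule ccontr)
    assume "\<not> s \<le> 1"
    then have "real n * s > real n * 1" using n by (intro mult_strict_left_mono) auto
    moreover have "real m \<le> real n" using assms(2) by simp
    ultimately show False using assms(3,4) by simp
  qed
  let ?B = "{x\<in>space (unif_sample n). real (card {i\<in>{..<n}. x i < s}) \<ge> real n * s + \<delta>}"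
  show ?thesis
  proof (intro bexI conjI)
    show "{x\<in>space (unif_sample n). ord_stat m n x < s} \<subseteq> ?B"
    proof safe
      fix x assume "x \<in> space (unif_sample n)" "ord_stat m n x < s"
      then have "card {i\<in>{..<n}. x i < s} \<ge> m" using ord_lt_count assms by blast
      then show "real (card {i\<in>{..<n}. x i < s}) \<ge> real n * s + \<delta>" using assms by linarith
    qed
    show "measure (unif_sample n) ?B \<le> exp (-2 * \<delta>\<^sup>2 / real n)"
      using hoeff_ge[OF n True s1 assms(3)] .
  qed (rule card_set_ge_sets)
next
  case False
  show ?thesis
  proof (intro bexI conjI)
    show "{x\<in>space (unif_sample n). ord_stat m n x < s} \<subseteq> bad n"
      unfolding bad_def
    proof safe
      fix x assume "x \<in> space (unif_sample n)" "ord_stat m n x < s" "\<forall>i<n. x i \<in> {0..1}"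
      then show False using ord_in01[OF assms(1,2), of x] False by auto
    qed
  qed (auto simp: bad_measure bad_sets)
qed



lemma exp_le_K: fixes e1 e2 K :: real shows "e1 \<le> e2 \<Longrightarrow> 1 \<le> K \<Longrightarrow> exp e1 \<le> K * exp e2"
proof -
  assume "e1 \<le> e2" "1 \<le> K"
  then have "exp e1 \<le> 1 * exp e2" by simp
  also have "\<dots> \<le> K * exp e2" using \<open>1 \<le> K\<close> by (intro mult_right_mono) auto
  finally show ?thesis .
qed

lemma Hsqrt_ge1: "H \<ge> 1 \<Longrightarrow> 1 \<le> real H * sqrt (real n + 1)"
proof -
  assume "H \<ge> 1"
  have "1 \<le> sqrt (real n + 1)" by simp
  moreover have "1 \<le> real H" using \<open>H \<ge> 1\<close> by simp
  ultimately show ?thesis by (metis mult_mono mult_1 zero_le_one order_trans)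
qed

lemma two_sided:
  assumes "1 \<le> j" "j \<le> H" "c \<ge> 1" "e \<ge> 0"
  shows "\<exists>B\<in>sets (unif_sample (H*c)).
     {x\<in>space (unif_sample (H*c)). ord_stat (j*c) (H*c) x > real j / real H + e \<or> ord_stat (j*c) (H*c) x < real j / real H - e} \<subseteq> B
     \<and> measure (unif_sample (H*c)) B \<le> 2 * exp (-2 * real (H*c) * e\<^sup>2)"
proof -
  let ?n = "H*c" and ?M = "unif_sample (H*c)"
  have H0: "real H > 0" using assms by simp
  have jc: "real (j*c) + real ?n * e = real ?n * (real j / real H + e)"
    using H0 by (simp add: field_simps)
  have jc2: "real ?n * (real j / real H - e) + real ?n * e = real (j*c)"
    using H0 by (simp add: field_simps)
  have m1: "1 \<le> j*c" using assms by simp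
  have m2: "j*c \<le> H*c" using assms by simp
  have d: "real ?n * e \<ge> 0" using assms by simp
  have ex: "-2 * (real ?n * e)\<^sup>2 / real ?n = -2 * real ?n * e\<^sup>2"
    using assms by (simp add: power2_eq_square field_simps)
  obtain B1 where B1: "B1 \<in> sets ?M" "{x\<in>space ?M. ord_stat (j*c) ?n x > real j / real H + e} \<subseteq> B1"
      "measure ?M B1 \<le> exp (-2 * real ?n * e\<^sup>2)"
    using core_upper[OF m1 m2 d, of "real j / real H + e"] jc ex by auto
  obtain B2 where B2: "B2 \<in> sets ?M" "{x\<in>space ?M. ord_stat (j*c) ?n x < real j / real H - e} \<subseteq> B2"
      "measure ?M B2 \<le> exp (-2 * real ?n * e\<^sup>2)"
    using core_lower[OF m1 m2 d, of "real j / real H - e"] jc2 ex by auto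
  interpret prob_space ?M by (rule M_prob)
  show ?thesis
  proof (intro bexI conjI)
    show "{x\<in>space ?M. ord_stat (j*c) ?n x > real j / real H + e \<or> ord_stat (j*c) ?n x < real j / real H - e} \<subseteq> B1 \<union> B2"
      using B1(2) B2(2) by blast
    have "measure ?M (B1 \<union> B2) \<le> measure ?M B1 + measure ?M B2"
      using B1(1) B2(1) by (rule measure_Un_le)
    then show "measure ?M (B1 \<union> B2) \<le> 2 * exp (-2 * real ?n * e\<^sup>2)" using B1(3) B2(3) by simp
  qed (use B1 B2 in auto)
qed

lemma final_bound:
  assumes "H \<ge> 1" "c0 > 0" "a \<ge> 0" "D \<ge> 1" "(real n + 1) / D \<le> a * real n" and "B \<le> c0 * exp (- a * real n * \<epsilon>\<^sup>2)"
  shows "B \<le> c0 * real H * sqrt (real n + 1) * exp (- (real n + 1) * \<epsilon>\<^sup>2 / D)"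
proof -
  have "(real n + 1) / D * \<epsilon>\<^sup>2 \<le> a * real n * \<epsilon>\<^sup>2" using assms(5) by (intro mult_right_mono) auto
  moreover have "- (real n + 1) * \<epsilon>\<^sup>2 / D = - ((real n + 1) / D * \<epsilon>\<^sup>2)" using assms(4) by (simp add: field_simps)
  ultimately have le: "- a * real n * \<epsilon>\<^sup>2 \<le> - (real n + 1) * \<epsilon>\<^sup>2 / D" by simp
  have "exp (- a * real n * \<epsilon>\<^sup>2) \<le> (real H * sqrt (real n + 1)) * exp (- (real n + 1) * \<epsilon>\<^sup>2 / D)"
    by (rule exp_le_K[OF le Hsqrt_ge1[OF assms(1)]])
  then have "c0 * exp (- a * real n * \<epsilon>\<^sup>2) \<le> c0 * ((real H * sqrt (real n + 1)) * exp (- (real n + 1) * \<epsilon>\<^sup>2 / D))"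
    using assms(2) by (intro mult_left_mono) auto
  then show ?thesis using assms(6) by (simp add: mult.assoc)
qed

lemma n_ge4: "2 \<le> H \<Longrightarrow> 2 \<le> c \<Longrightarrow> real (H*c) \<ge> 4"
proof -
  assume "2 \<le> H" "2 \<le> c"
  then have "2*2 \<le> H*c" by (intro mult_le_mono)
  then show ?thesis by linarith
qed

lemma part1:
  "\<exists>C>0. \<exists>N. \<forall>H c k. \<forall>\<epsilon>::real. H \<ge> N \<longrightarrow> c \<ge> N \<longrightarrow> 1 \<le> k \<longrightarrow> k \<le> H - 1 \<longrightarrow>
       \<epsilon> > 1 / (real (H*c) - 1) \<longrightarrow>
       measure (unif_sample (H*c))
         {x \<in> space (unif_sample (H*c)). ord_stat (k*c) (H*c) x > real k / real H + \<epsilon>}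
       \<le> C * real H * sqrt (real (H*c) + 1) * exp (- (real (H*c) + 1) * \<epsilon>\<^sup>2 / 2)"
proof (intro exI[of _ "2::real"] conjI exI[of _ "2::nat"] allI impI)
  fix H c k :: nat and \<epsilon> :: real
  assume a: "2 \<le> H" "2 \<le> c" "1 \<le> k" "k \<le> H - 1" "1 / (real (H * c) - 1) < \<epsilon>"
  let ?n = "H*c" and ?M = "unif_sample (H*c)"
  have n4: "real ?n \<ge> 4" using n_ge4[OF a(1,2)] .
  have "1 / (real ?n - 1) > 0" using n4 by simp
  then have e0: "\<epsilon> > 0" using a(5) by linarith
  have kH: "k \<le> H" using a(4) by arith
  have c1: "1 \<le> c" using a(2) by arith
  obtain B where B: "B \<in> sets ?M" "{x\<in>space ?M. ord_stat (k*c) ?n x > real k / real H + \<epsilon> \<or> ord_stat (k*c) ?n x < real k / real H - \<epsilon>} \<subseteq> B"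
     "measure ?M B \<le> 2 * exp (-2 * real ?n * \<epsilon>\<^sup>2)"
    using two_sided[OF a(3) kH c1 less_imp_le[OF e0]] by blast
  have "measure ?M {x\<in>space ?M. ord_stat (k*c) ?n x > real k / real H + \<epsilon>} \<le> measure ?M B"
    by (rule measure_mono_any[OF B(1)]) (use B(2) in auto)
  also have "\<dots> \<le> 2 * exp (-2 * real ?n * \<epsilon>\<^sup>2)" by (rule B(3))
  finally have bnd: "measure ?M {x\<in>space ?M. ord_stat (k*c) ?n x > real k / real H + \<epsilon>} \<le> 2 * exp (-2 * real ?n * \<epsilon>\<^sup>2)" .
  show "measure ?M {x\<in>space ?M. ord_stat (k*c) ?n x > real k / real H + \<epsilon>}
      \<le> 2 * real H * sqrt (real ?n + 1) * exp (- (real ?n + 1) * \<epsilon>\<^sup>2 / 2)"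
    by (rule final_bound[where a=2]) (use a n4 bnd in auto)
qed (simp)

lemma part2:
  "\<exists>C>0. \<exists>N. \<forall>H c k. \<forall>\<epsilon>::real. H \<ge> N \<longrightarrow> c \<ge> N \<longrightarrow> 1 \<le> k \<longrightarrow> k \<le> H - 1 \<longrightarrow>
       \<epsilon> > 2 / (real (H*c) - 1) \<longrightarrow>
       measure (unif_sample (H*c))
         {x \<in> space (unif_sample (H*c)). ord_stat (k*c) (H*c) x < real k / real H - \<epsilon>}
       \<le> C * real H * sqrt (real (H*c) + 1) * exp (- (real (H*c) + 1) * \<epsilon>\<^sup>2 / 8)"
proof (intro exI[of _ "2::real"] conjI exI[of _ "2::nat"] allI impI)
  fix H c k :: nat and \<epsilon> :: real
  assume a: "2 \<le> H" "2 \<le> c" "1 \<le> k" "k \<le> H - 1" "2 / (real (H * c) - 1) < \<epsilon>"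
  let ?n = "H*c" and ?M = "unif_sample (H*c)"
  have n4: "real ?n \<ge> 4" using n_ge4[OF a(1,2)] .
  have "2 / (real ?n - 1) > 0" using n4 by simp
  then have e0: "\<epsilon> > 0" using a(5) by linarith
  have kH: "k \<le> H" using a(4) by arith
  have c1: "1 \<le> c" using a(2) by arith
  obtain B where B: "B \<in> sets ?M" "{x\<in>space ?M. ord_stat (k*c) ?n x > real k / real H + \<epsilon> \<or> ord_stat (k*c) ?n x < real k / real H - \<epsilon>} \<subseteq> B"
     "measure ?M B \<le> 2 * exp (-2 * real ?n * \<epsilon>\<^sup>2)"
    using two_sided[OF a(3) kH c1 less_imp_le[OF e0]] by blast
  have "measure ?M {x\<in>space ?M. ord_stat (k*c) ?n x < real k / real H - \<epsilon>} \<le> measure ?M B"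
    by (rule measure_mono_any[OF B(1)]) (use B(2) in auto)
  also have "\<dots> \<le> 2 * exp (-2 * real ?n * \<epsilon>\<^sup>2)" by (rule B(3))
  finally have bnd: "measure ?M {x\<in>space ?M. ord_stat (k*c) ?n x < real k / real H - \<epsilon>} \<le> 2 * exp (-2 * real ?n * \<epsilon>\<^sup>2)" .
  show "measure ?M {x\<in>space ?M. ord_stat (k*c) ?n x < real k / real H - \<epsilon>}
      \<le> 2 * real H * sqrt (real ?n + 1) * exp (- (real ?n + 1) * \<epsilon>\<^sup>2 / 8)"
    by (rule final_bound[where a=2]) (use a n4 bnd in auto)
qed (simp)

lemma L1: fixes a e y :: real
  assumes "a > 0" "e > 0" "\<bar>\<bar>y\<bar> - a\<bar> > 2 * e" shows "y > a + e \<or> y < a - e"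
  using assms by (auto simp: abs_if split: if_splits)

lemma L2: fixes a e y :: real
  assumes "a > 0" "e > 0" "\<bar>\<bar>1 - y\<bar> - a\<bar> > 2 * e" shows "y > (1 - a) + e \<or> y < (1 - a) - e"
  using assms by (auto simp: abs_if split: if_splits)

lemma L3: fixes a e y1 y2 b :: real
  assumes "a > 0" "e > 0" "\<bar>\<bar>y1 - y2\<bar> - a\<bar> > 2 * e"
  shows "(y1 > b + e \<or> y1 < b - e) \<or> (y2 > (b + a) + e \<or> y2 < (b + a) - e)"
  using assms by (auto simp: abs_if split: if_splits)

lemma part3:
  "\<exists>C>0. \<exists>N. \<forall>H c k. \<forall>\<epsilon>::real. H \<ge> N \<longrightarrow> c \<ge> N \<longrightarrow> 1 \<le> k \<longrightarrow> k \<le> H \<longrightarrow>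
       \<epsilon> > 4 / (real (H*c) - 1) \<longrightarrow>
       measure (unif_sample (H*c))
         {x \<in> space (unif_sample (H*c)). \<bar>spacing k H c x - 1 / real H\<bar> > \<epsilon>}
       \<le> C * real H * sqrt (real (H*c) + 1) * exp (- (real (H*c) + 1) * \<epsilon>\<^sup>2 / 32)"
proof (intro exI[of _ "4::real"] conjI exI[of _ "2::nat"] allI impI)
  fix H c k :: nat and \<epsilon> :: real
  assume a: "2 \<le> H" "2 \<le> c" "1 \<le> k" "k \<le> H" "4 / (real (H * c) - 1) < \<epsilon>"
  let ?n = "H*c" and ?M = "unif_sample (H*c)"
  let ?E = "{x \<in> space ?M. \<bar>spacing k H c x - 1 / real H\<bar> > \<epsilon>}"
  define e where "e = \<epsilon> / 2"
  have n4: "real ?n \<ge> 4" using n_ge4[OF a(1,2)] .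
  have "4 / (real ?n - 1) > 0" using n4 by simp
  then have e0: "e > 0" using a(5) unfolding e_def by linarith
  have eps: "\<epsilon> = 2 * e" unfolding e_def by simp
  have c1: "1 \<le> c" using a(2) by arith
  have H0: "real H > 0" "1 / real H > 0" using a(1) by auto
  have ex: "2 * exp (-2 * real ?n * e\<^sup>2) = 2 * exp (- (1/2) * real ?n * \<epsilon>\<^sup>2)"
    unfolding e_def by (simp add: power2_eq_square)
  have bnd: "measure ?M ?E \<le> 4 * exp (-2 * real ?n * e\<^sup>2)"
  proof (cases "k = 1")
    case True
    obtain B where B: "B \<in> sets ?M" "{x\<in>space ?M. ord_stat (1*c) ?n x > real 1 / real H + e \<or> ord_stat (1*c) ?n x < real 1 / real H - e} \<subseteq> B"
       "measure ?M B \<le> 2 * exp (-2 * real ?n * e\<^sup>2)"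
      using two_sided[of 1 H c e] a c1 e0 by auto
    have "?E \<subseteq> B"
    proof
      fix x assume x: "x \<in> ?E"
      then have "\<bar>\<bar>ord_stat c ?n x\<bar> - 1 / real H\<bar> > 2 * e" using True eps by (simp add: spacing_def)
      from L1[OF H0(2) e0 this] x B(2) show "x \<in> B" by auto
    qed
    then have "measure ?M ?E \<le> measure ?M B" by (rule measure_mono_any[OF B(1)])
    moreover have "0 \<le> exp (-2 * real ?n * e\<^sup>2)" by simp
    ultimately show ?thesis using B(3) by linarith
  next
    case k1: False
    show ?thesis
    proof (cases "k = H")
      case True
      have j1: "1 \<le> H - 1" using a(1) by arith
      have j2: "H - 1 \<le> H" by arith
      have rj: "real (H - 1) / real H = 1 - 1 / real H" using a(1) H0 by (simp add: of_nat_diff field_simps)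
      obtain B where B: "B \<in> sets ?M" "{x\<in>space ?M. ord_stat ((H-1)*c) ?n x > real (H-1) / real H + e \<or> ord_stat ((H-1)*c) ?n x < real (H-1) / real H - e} \<subseteq> B"
         "measure ?M B \<le> 2 * exp (-2 * real ?n * e\<^sup>2)"
        using two_sided[OF j1 j2 c1 less_imp_le[OF e0]] by blast
      have "?E \<subseteq> B"
      proof
        fix x assume x: "x \<in> ?E"
        then have "\<bar>\<bar>1 - ord_stat ((H-1)*c) ?n x\<bar> - 1 / real H\<bar> > 2 * e" using True k1 eps by (simp add: spacing_def)
        from L2[OF H0(2) e0 this] x B(2) rj show "x \<in> B" by auto
      qed
      then have "measure ?M ?E \<le> measure ?M B" by (rule measure_mono_any[OF B(1)])
      moreover have "0 \<le> exp (-2 * real ?n * e\<^sup>2)" by simp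
    ultimately show ?thesis using B(3) by linarith
    next
      case kH: False
      have j1: "1 \<le> k - 1" using a(3) k1 by arith
      have j2: "k - 1 \<le> H" using a(4) by arith
      have rj: "real (k - 1) / real H + 1 / real H = real k / real H" using a(3) H0 by (simp add: of_nat_diff field_simps)
      obtain B1 where B1: "B1 \<in> sets ?M" "{x\<in>space ?M. ord_stat ((k-1)*c) ?n x > real (k-1) / real H + e \<or> ord_stat ((k-1)*c) ?n x < real (k-1) / real H - e} \<subseteq> B1"
         "measure ?M B1 \<le> 2 * exp (-2 * real ?n * e\<^sup>2)"
        using two_sided[OF j1 j2 c1 less_imp_le[OF e0]] by blast
      obtain B2 where B2: "B2 \<in> sets ?M" "{x\<in>space ?M. ord_stat (k*c) ?n x > real k / real H + e \<or> ord_stat (k*c) ?n x < real k / real H - e} \<subseteq> B2"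
         "measure ?M B2 \<le> 2 * exp (-2 * real ?n * e\<^sup>2)"
        using two_sided[OF a(3) a(4) c1 less_imp_le[OF e0]] by blast
      have "?E \<subseteq> B1 \<union> B2"
      proof
        fix x assume x: "x \<in> ?E"
        then have "\<bar>\<bar>ord_stat ((k-1)*c) ?n x - ord_stat (k*c) ?n x\<bar> - 1 / real H\<bar> > 2 * e"
          using kH k1 eps by (simp add: spacing_def)
        from L3[OF H0(2) e0 this, of "real (k-1) / real H"] x B1(2) B2(2) rj show "x \<in> B1 \<union> B2" by auto
      qed
      then have "measure ?M ?E \<le> measure ?M (B1 \<union> B2)" by (rule measure_mono_any[OF sets.Un[OF B1(1) B2(1)]])
      also have "\<dots> \<le> measure ?M B1 + measure ?M B2" using B1(1) B2(1) by (rule measure_Un_le)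
      finally show ?thesis using B1(3) B2(3) by simp
    qed
  qed
  also have "\<dots> = 4 * exp (- (1/2) * real ?n * \<epsilon>\<^sup>2)" using ex by simp
  finally have bnd': "measure ?M ?E \<le> 4 * exp (- (1/2) * real ?n * \<epsilon>\<^sup>2)" .
  show "measure ?M ?E \<le> 4 * real H * sqrt (real ?n + 1) * exp (- (real ?n + 1) * \<epsilon>\<^sup>2 / 32)"
    by (rule final_bound[where a="1/2"]) (use a n4 bnd' in auto)
qed (simp)

theorem lemma20:
  shows
  "(\<exists>C>0. \<exists>N. \<forall>H c k. \<forall>\<epsilon>::real. H \<ge> N \<longrightarrow> c \<ge> N \<longrightarrow> 1 \<le> k \<longrightarrow> k \<le> H - 1 \<longrightarrow>
       \<epsilon> > 1 / (real (H*c) - 1) \<longrightarrow>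
       measure (unif_sample (H*c))
         {x \<in> space (unif_sample (H*c)). ord_stat (k*c) (H*c) x > real k / real H + \<epsilon>}
       \<le> C * real H * sqrt (real (H*c) + 1) * exp (- (real (H*c) + 1) * \<epsilon>\<^sup>2 / 2))
   \<and> (\<exists>C>0. \<exists>N. \<forall>H c k. \<forall>\<epsilon>::real. H \<ge> N \<longrightarrow> c \<ge> N \<longrightarrow> 1 \<le> k \<longrightarrow> k \<le> H - 1 \<longrightarrow>
       \<epsilon> > 2 / (real (H*c) - 1) \<longrightarrow>
       measure (unif_sample (H*c))
         {x \<in> space (unif_sample (H*c)). ord_stat (k*c) (H*c) x < real k / real H - \<epsilon>}
       \<le> C * real H * sqrt (real (H*c) + 1) * exp (- (real (H*c) + 1) * \<epsilon>\<^sup>2 / 8))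
   \<and> (\<exists>C>0. \<exists>N. \<forall>H c k. \<forall>\<epsilon>::real. H \<ge> N \<longrightarrow> c \<ge> N \<longrightarrow> 1 \<le> k \<longrightarrow> k \<le> H \<longrightarrow>
       \<epsilon> > 4 / (real (H*c) - 1) \<longrightarrow>
       measure (unif_sample (H*c))
         {x \<in> space (unif_sample (H*c)). \<bar>spacing k H c x - 1 / real H\<bar> > \<epsilon>}
       \<le> C * real H * sqrt (real (H*c) + 1) * exp (- (real (H*c) + 1) * \<epsilon>\<^sup>2 / 32))"
  using part1 part2 part3 by blast


end
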